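(* Let $V$ be a finite dimensional normed vector space, $H\le O(V)$, and $(V,H,L_i)$ holonomic spaces whose holonomic metrics $d_{L_i}$ converge uniformly on compact sets to a semi-metric $d_\infty$. Suppose there is $c>0$ with $c\le\mathrm{HolRad}_i(0)$ for all $i$, where $\mathrm{HolRad}_i(0)$ is the holonomy radius at $0$ of $(V,H,L_i)$. Then $d_\infty$ is nondegenerate, i.e. a metric.
   Context: $O(V)$: norm-preserving linear maps. Group-norm on $H$: $L\ge0$, $L(a)=0$ iff $a=e$, $L(a^{-1})=L(a)$, $L(ab)\le L(a)+L(b)$. Holonomic space $(V,H,L)$: $H\le O(V)$, $L$ a group-norm, such that for every $u$ there is $R>0$ with $\|v-w\|^2-\|av-w\|^2\le L(a)^2$ for all $a\in H$ and $\|u-v\|,\|u-w\|<R$; holonomic metric $d_L(u,v)=\inf_{a\in H}\sqrt{L(a)^2+\|au-v\|^2}$. Holonomy radius at $u$: the supremum of $R>0$ such that $d_L(v,w)=\|v-w\|$ for all $v,w$ in the norm ball of radius $R$ about $u$. *)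

theory Defs
  imports "HOL-Analysis.Analysis"
begin

definition fin_dim_space :: "'v::real_normed_vector itself \<Rightarrow> bool" where
  "fin_dim_space _ \<longleftrightarrow> (\<exists>B::'v set. finite B \<and> span B = UNIV)"

definition orth_maps :: "('v::real_normed_vector \<Rightarrow> 'v) set" where
  "orth_maps = {a. linear a \<and> (\<forall>v. norm (a v) = norm v)}"

definition subgroup_O :: "('v::real_normed_vector \<Rightarrow> 'v) set \<Rightarrow> bool" where
  "subgroup_O H \<longleftrightarrow> H \<subseteq> orth_maps \<and> id \<in> H \<and>
     (\<forall>a\<in>H. \<forall>b\<in>H. a \<circ> b \<in> H) \<and> (\<forall>a\<in>H. bij a \<and> inv a \<in> H)"

definition group_norm :: "('v::real_normed_vector \<Rightarrow> 'v) set \<Rightarrow> (('v \<Rightarrow> 'v) \<Rightarrow> real) \<Rightarrow> bool" where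
  "group_norm H L \<longleftrightarrow>
     (\<forall>a\<in>H. L a \<ge> 0) \<and> (\<forall>a\<in>H. L a = 0 \<longleftrightarrow> a = id) \<and>
     (\<forall>a\<in>H. L (inv a) = L a) \<and> (\<forall>a\<in>H. \<forall>b\<in>H. L (a \<circ> b) \<le> L a + L b)"

definition holonomic :: "('v::real_normed_vector \<Rightarrow> 'v) set \<Rightarrow> (('v \<Rightarrow> 'v) \<Rightarrow> real) \<Rightarrow> bool" where
  "holonomic H L \<longleftrightarrow> subgroup_O H \<and> group_norm H L \<and>
     (\<forall>u. \<exists>R>0. \<forall>a\<in>H. \<forall>v w. norm (u - v) < R \<longrightarrow> norm (u - w) < R \<longrightarrow>
         (norm (v - w))\<^sup>2 - (norm (a v - w))\<^sup>2 \<le> (L a)\<^sup>2)"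

definition hol_metric :: "('v::real_normed_vector \<Rightarrow> 'v) set \<Rightarrow> (('v \<Rightarrow> 'v) \<Rightarrow> real) \<Rightarrow> 'v \<Rightarrow> 'v \<Rightarrow> real" where
  "hol_metric H L u v = (INF a\<in>H. sqrt ((L a)\<^sup>2 + (norm (a u - v))\<^sup>2))"

text \<open>Holonomy radius at u (possibly infinite, hence extended real).\<close>
definition hol_radius :: "('v::real_normed_vector \<Rightarrow> 'v) set \<Rightarrow> (('v \<Rightarrow> 'v) \<Rightarrow> real) \<Rightarrow> 'v \<Rightarrow> ereal" where
  "hol_radius H L u = Sup {ereal R | R. R > 0 \<and>
     (\<forall>v w. norm (u - v) < R \<longrightarrow> norm (u - w) < R \<longrightarrow> hol_metric H L v w = norm (v - w))}"

definition semi_metric :: "('v \<Rightarrow> 'v \<Rightarrow> real) \<Rightarrow> bool" where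
  "semi_metric d \<longleftrightarrow> (\<forall>x y. d x y \<ge> 0) \<and> (\<forall>x. d x x = 0) \<and> (\<forall>x y. d x y = d y x) \<and>
     (\<forall>x y z. d x z \<le> d x y + d y z)"

end

theory Submission
  imports Defs
begin

lemma bdd_hm: "bdd_below ((\<lambda>a. sqrt ((L a)\<^sup>2 + (norm (a u - v))\<^sup>2)) ` H)"
  by (rule bdd_belowI[where m=0]) auto

lemma key_bound:
  assumes hol: "holonomic H L" and cp: "c' > 0"
    and rad: "\<And>v w. norm v < c' \<Longrightarrow> norm w < c' \<Longrightarrow> hol_metric H L v w = norm (v - w)"
    and aH: "a \<in> H"
  shows "norm (x - a x) \<le> (2 * norm x / c') * L a"
proof -
  have sg: "subgroup_O H" and gn: "group_norm H L" using hol unfolding holonomic_def by auto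
  have orth: "linear a" "\<And>v. norm (a v) = norm v"
    using sg aH unfolding subgroup_O_def orth_maps_def by auto
  have L0: "L a \<ge> 0" using gn aH unfolding group_norm_def by auto
  have vb: "norm (v - a v) \<le> L a" if "norm v < c'" for v
  proof -
    have "norm (v - a v) = hol_metric H L v (a v)" using rad[of v "a v"] that orth by simp
    also have "\<dots> \<le> sqrt ((L a)\<^sup>2 + (norm (a v - a v))\<^sup>2)"
      unfolding hol_metric_def by (rule cINF_lower[OF bdd_hm aH])
    also have "\<dots> = L a" using L0 by simp
    finally show ?thesis .
  qed
  show ?thesis
  proof (cases "x = 0")
    case True
    then show ?thesis using linear_0[OF orth(1)] by simp
  next
    case False
    define t where "t = c' / (2 * norm x)"
    have tp: "t > 0" using False cp by (simp add: t_def)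
    have "norm (t *\<^sub>R x) = c'/2" using False cp by (simp add: t_def)
    then have "norm (t *\<^sub>R x) < c'" using cp by simp
    from vb[OF this] have "norm (t *\<^sub>R x - a (t *\<^sub>R x)) \<le> L a" .
    moreover have "t *\<^sub>R x - a (t *\<^sub>R x) = t *\<^sub>R (x - a x)"
      using linear_cmul[OF orth(1)] by (simp add: scaleR_diff_right)
    ultimately have "t * norm (x - a x) \<le> L a" using tp by simp
    then have "norm (x - a x) \<le> L a / t" using tp by (simp add: field_simps)
    also have "L a / t = (2 * norm x / c') * L a" using False cp by (simp add: t_def field_simps)
    finally show ?thesis .
  qed
qed

theorem mainTheorem16:
  fixes H :: "('v::real_normed_vector \<Rightarrow> 'v) set"
    and L :: "nat \<Rightarrow> ('v \<Rightarrow> 'v) \<Rightarrow> real"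
    and dinf :: "'v \<Rightarrow> 'v \<Rightarrow> real"
    and c :: real
  assumes "fin_dim_space TYPE('v)"
    and "subgroup_O H"
    and "\<And>i. holonomic H (L i)"
    and "\<And>K. compact K \<Longrightarrow>
           uniform_limit K (\<lambda>i (x, y). hol_metric H (L i) x y) (\<lambda>(x, y). dinf x y) sequentially"
    and "semi_metric dinf"
    and "c > 0"
    and "\<And>i. ereal c \<le> hol_radius H (L i) 0"
  shows "\<forall>x y. dinf x y = 0 \<longrightarrow> x = y"
proof (intro allI impI)
  fix x y assume d0: "dinf x y = 0"
  define c' where "c' = c / 2"
  have cp: "c' > 0" using assms(6) by (simp add: c'_def)
  have rad: "hol_metric H (L i) v w = norm (v - w)" if "norm v < c'" "norm w < c'" for i v w
  proof -
    have "ereal c' < ereal c" using assms(6) by (simp add: c'_def)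
    then have "ereal c' < hol_radius H (L i) 0" using assms(7)[of i] by (rule less_le_trans)
    then obtain R where R: "R > c'" "\<forall>v w. norm (0 - v) < R \<longrightarrow> norm (0 - w) < R \<longrightarrow>
        hol_metric H (L i) v w = norm (v - w)"
      unfolding hol_radius_def less_Sup_iff by auto
    then show ?thesis using that by auto
  qed
  have idH: "id \<in> H" using assms(2) unfolding subgroup_O_def by auto
  define d where "d i = hol_metric H (L i) x y" for i
  have lim: "d \<longlonglongrightarrow> 0"
    using tendsto_uniform_limitI[OF assms(4)[of "{(x,y)}"], of "(x,y)"] d0
    unfolding d_def by simp
  define M where "M = 2 * norm x / c'"
  have Mnn: "M \<ge> 0" using cp by (simp add: M_def)
  have bound: "norm (x - y) \<le> (M + 1) * (d i + 1 / real (Suc i))" for i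
  proof -
    have "d i < d i + 1 / real (Suc i)" by simp
    then have "\<exists>a\<in>H. sqrt ((L i a)\<^sup>2 + (norm (a x - y))\<^sup>2) < d i + 1 / real (Suc i)"
      unfolding d_def hol_metric_def
      by (subst (asm) cINF_less_iff[OF _ bdd_hm]) (use idH in auto)
    then obtain a where aH: "a \<in> H" and
      lt: "sqrt ((L i a)\<^sup>2 + (norm (a x - y))\<^sup>2) < d i + 1 / real (Suc i)"
      by blast
    have "L i a \<le> sqrt ((L i a)\<^sup>2 + (norm (a x - y))\<^sup>2)"
      by (rule real_le_rsqrt) simp
    with lt have l1: "L i a \<le> d i + 1 / real (Suc i)" by linarith
    have "norm (a x - y) \<le> sqrt ((L i a)\<^sup>2 + (norm (a x - y))\<^sup>2)"
      by (rule real_le_rsqrt) simp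
    with lt have l2: "norm (a x - y) \<le> d i + 1 / real (Suc i)" by linarith
    have kb: "norm (x - a x) \<le> M * L i a"
      unfolding M_def by (rule key_bound[OF assms(3) cp rad aH])
    have "norm (x - y) \<le> norm (x - a x) + norm (a x - y)" using norm_triangle_ineq[of "x - a x" "a x - y"] by simp
    also have "\<dots> \<le> M * (d i + 1 / real (Suc i)) + (d i + 1 / real (Suc i))"
      using kb l2 mult_left_mono[OF l1 Mnn] by linarith
    also have "\<dots> = (M + 1) * (d i + 1 / real (Suc i))" by (simp add: algebra_simps add_divide_distrib)
    finally show ?thesis .
  qed
  have "(\<lambda>i. (M + 1) * (d i + 1 / real (Suc i))) \<longlonglongrightarrow> (M + 1) * (0 + 0)"
  proof -
    have "(\<lambda>i. 1 / real (Suc i)) \<longlonglongrightarrow> 0" by (rule LIMSEQ_Suc[OF lim_inverse_n'])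
    with lim show ?thesis by (intro tendsto_mult tendsto_const tendsto_add)
  qed
  then have "norm (x - y) \<le> 0"
    using bound by (intro LIMSEQ_le_const) auto
  then show "x = y" by simp
qed

end
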